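(* $$f(n,q) \geq q^{2^{n-1}(1+o(1))} \quad \text{as } q\to\infty,\ n\to\infty.$$ That is, there is a function $\epsilon(n,q)$ with $\epsilon(n,q)\to 0$ as $q\to\infty$ and $n\to\infty$ such that $f(n,q) \geq q^{2^{n-1}(1+\epsilon(n,q))}$ for all integers $q\ge 2$ and $n \ge 1$.
   Context: A $q$-ary word is a finite string of characters over an alphabet of $q$ letters; the empty word is $\varepsilon$. $V$ is a subword of $W$ if $W = UVU'$ for some (possibly empty) words $U,U'$. A word $W$ is an instance of a word $V = x_0x_1\cdots x_{m-1}$ (each $x_i$ a letter) if $W = A_0A_1\cdots A_{m-1}$ with each $A_i$ nonempty and $A_i = A_j$ whenever $x_i = x_j$. A word $U$ encounters $V$ if some subword of $U$ is an instance of $V$; otherwise $U$ avoids $V$. The Zimin words are defined by $Z_0 := \varepsilon$ and $Z_{n+1} := Z_n x_n Z_n$ for distinct letters $x_0,x_1,\dots$. For positive integers $n,q$, $f(n,q)$ denotes the smallest integer $M$ such that every $q$-ary word of length $M$ encounters $Z_n$. *)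

theory Defs
  imports Complex_Main
begin

definition qary :: "nat \<Rightarrow> nat list \<Rightarrow> bool" where
  "qary q w \<longleftrightarrow> set w \<subseteq> {..<q}"

definition subword :: "'a list \<Rightarrow> 'a list \<Rightarrow> bool" where
  "subword V W \<longleftrightarrow> (\<exists>U U'. W = U @ V @ U')"

definition instance_of :: "'a list \<Rightarrow> 'b list \<Rightarrow> bool" where
  "instance_of W V \<longleftrightarrow>
     (\<exists>As :: 'a list list. length As = length V \<and>
        (\<forall>i < length V. As ! i \<noteq> []) \<and>
        (\<forall>i < length V. \<forall>j < length V. V ! i = V ! j \<longrightarrow> As ! i = As ! j) \<and>
        W = concat As)"

definition encounters :: "'a list \<Rightarrow> 'b list \<Rightarrow> bool" where
  "encounters U V \<longleftrightarrow> (\<exists>S. subword S U \<and> instance_of S V)"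

fun zimin :: "nat \<Rightarrow> nat list" where
  "zimin 0 = []"
| "zimin (Suc n) = zimin n @ [n] @ zimin n"

definition f :: "nat \<Rightarrow> nat \<Rightarrow> nat" where
  "f n q = (LEAST M. \<forall>w. qary q w \<and> length w = M \<longrightarrow> encounters w (zimin n))"

end

theory Submission imports Defs "HOL-Analysis.Analysis" "HOL-Real_Asymp.Real_Asymp" begin

lemma len_zimin: "length (zimin n) = 2^n - 1"
proof (induction n)
  case (Suc n)
  have "(1::nat) \<le> 2^n" by simp
  thus ?case using Suc by simp
qed simp

lemma set_zimin: "set (zimin n) \<subseteq> {..<n}"
  by (induction n) auto

lemma nth3: "k < length X + 1 + length X \<Longrightarrow>
  (X@[y]@X)!k = (if k < length X then X!k else if k = length X then y else X!(k - length X - 1))"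
  by (auto simp: nth_append)

lemma len_concat_ne: "\<forall>x\<in>set As. x \<noteq> [] \<Longrightarrow> length As \<le> length (concat As)"
proof (induction As)
  case (Cons a As) thus ?case by (cases a) auto
qed simp

lemma inst_len: "instance_of w V \<Longrightarrow> length V \<le> length w"
  unfolding instance_of_def
  by (metis in_set_conv_nth len_concat_ne)

lemma inst_Suc_I:
  assumes "instance_of S (zimin n)" "G \<noteq> []"
  shows "instance_of (S@G@S) (zimin (Suc n))"
proof -
  obtain As where As: "length As = length (zimin n)" "\<forall>i<length (zimin n). As!i \<noteq> []"
    "\<forall>i<length (zimin n). \<forall>j<length (zimin n). zimin n!i = zimin n!j \<longrightarrow> As!i = As!j"
    "S = concat As" using assms(1) unfolding instance_of_def by blast
  let ?m = "length (zimin n)"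
  have lt: "\<And>k. k < ?m \<Longrightarrow> zimin n ! k < n" using set_zimin nth_mem by fastforce
  define r where "r k = (if k < ?m then k else k - ?m - 1)" for k
  have Z: "zimin (Suc n) = zimin n @ [n] @ zimin n" by simp
  have lZ: "length (zimin (Suc n)) = ?m + 1 + ?m" by simp
  have key: "(zimin (Suc n) ! k = n \<longleftrightarrow> k = ?m) \<and>
       (k \<noteq> ?m \<longrightarrow> r k < ?m \<and> zimin (Suc n) ! k = zimin n ! r k \<and> (As @ [G] @ As) ! k = As ! r k)
       \<and> (k = ?m \<longrightarrow> (As @ [G] @ As) ! k = G)"
    if k': "k < ?m + 1 + ?m" for k
  proof -
    have k: "k < length As + 1 + length As" using k' As(1) by simp
    have A1: "(As @ [G] @ As) ! k = (if k < ?m then As!k else if k = ?m then G else As!(k - ?m - 1))"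
      using nth3[OF k] As(1) by simp
    have Z1: "zimin (Suc n) ! k = (if k < ?m then zimin n!k else if k = ?m then n else zimin n!(k - ?m - 1))"
      unfolding Z using nth3[OF k'] by simp
    show ?thesis
    proof (cases "k < ?m")
      case True thus ?thesis using A1 Z1 lt[of k] unfolding r_def by simp
    next
      case False
      show ?thesis
      proof (cases "k = ?m")
        case True thus ?thesis using A1 Z1 by simp
      next
        case F2: False
        have "k - ?m - 1 < ?m" using k' False F2 by simp
        thus ?thesis using A1 Z1 lt[of "k - ?m - 1"] False F2 unfolding r_def by simp
      qed
    qed
  qed
  show ?thesis unfolding instance_of_def
  proof (intro exI[of _ "As @ [G] @ As"] conjI)
    show "length (As @ [G] @ As) = length (zimin (Suc n))" using As(1) lZ by simp
    show "\<forall>i<length (zimin (Suc n)). (As @ [G] @ As) ! i \<noteq> []"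
    proof (intro allI impI)
      fix i assume "i < length (zimin (Suc n))"
      hence i: "i < ?m + 1 + ?m" using lZ by simp
      show "(As @ [G] @ As) ! i \<noteq> []"
      proof (cases "i = ?m")
        case True thus ?thesis using key[OF i] assms(2) by simp
      next
        case False thus ?thesis using key[OF i] As(2) by simp
      qed
    qed
    show "\<forall>i<length (zimin (Suc n)). \<forall>j<length (zimin (Suc n)).
       zimin (Suc n) ! i = zimin (Suc n) ! j \<longrightarrow> (As @ [G] @ As) ! i = (As @ [G] @ As) ! j"
    proof (intro allI impI)
      fix i j assume "i < length (zimin (Suc n))" "j < length (zimin (Suc n))"
        and eq: "zimin (Suc n) ! i = zimin (Suc n) ! j"
      hence i: "i < ?m + 1 + ?m" and j: "j < ?m + 1 + ?m" using lZ by simp_all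
      show "(As @ [G] @ As) ! i = (As @ [G] @ As) ! j"
      proof (cases "i = ?m")
        case True
        hence "j = ?m" using key[OF i] key[OF j] eq by simp
        thus ?thesis using True by simp
      next
        case False
        hence jm: "j \<noteq> ?m" using key[OF i] key[OF j] eq by metis
        have "zimin n ! r i = zimin n ! r j" using key[OF i] key[OF j] eq False jm by metis
        hence "As ! r i = As ! r j" using As(3) key[OF i] key[OF j] False jm by blast
        thus ?thesis using key[OF i] key[OF j] False jm by simp
      qed
    qed
    show "S @ G @ S = concat (As @ [G] @ As)" using As(4) by simp
  qed
qed

lemma inst_Suc_D:
  assumes "instance_of w (zimin (Suc n))"
  shows "\<exists>A B. w = A@B@A \<and> B \<noteq> [] \<and> instance_of A (zimin n)"
proof -
  let ?Z = "zimin (Suc n)" let ?m = "length (zimin n)"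
  obtain As where As: "length As = length ?Z" "\<forall>i<length ?Z. As!i \<noteq> []"
    "\<forall>i<length ?Z. \<forall>j<length ?Z. ?Z!i = ?Z!j \<longrightarrow> As!i = As!j"
    "w = concat As" using assms unfolding instance_of_def by blast
  have lZ: "length ?Z = ?m + 1 + ?m" by simp
  have Zn: "?Z = zimin n @ [n] @ zimin n" by simp
  have td: "take ?m As = drop (Suc ?m) As"
  proof (rule nth_equalityI)
    show "length (take ?m As) = length (drop (Suc ?m) As)" using As(1) lZ by simp
    fix i assume "i < length (take ?m As)"
    hence i: "i < ?m" by simp
    have "?Z ! i = ?Z ! (Suc ?m + i)" unfolding Zn using i by (simp add: nth_append)
    hence "As ! i = As ! (Suc ?m + i)" using As(3) i lZ by auto
    thus "take ?m As ! i = drop (Suc ?m) As ! i" using i As(1) lZ by simp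
  qed
  have split: "As = take ?m As @ [As!?m] @ drop (Suc ?m) As"
    using id_take_nth_drop[of ?m As] As(1) lZ by simp
  show ?thesis
  proof (intro exI conjI)
    show "w = concat (take ?m As) @ As!?m @ concat (take ?m As)"
      using As(4) split td by (metis concat.simps(2) concat_append concat.simps(1) append_Nil2)
    show "As ! ?m \<noteq> []" using As(2) lZ by auto
    show "instance_of (concat (take ?m As)) (zimin n)" unfolding instance_of_def
    proof (intro exI[of _ "take ?m As"] conjI allI impI)
      show "length (take ?m As) = ?m" using As(1) lZ by simp
      fix i assume i: "i < ?m"
      show "take ?m As ! i \<noteq> []" using As(2) i lZ by auto
      fix j assume j: "j < ?m" and e: "zimin n ! i = zimin n ! j"
      have "?Z ! i = ?Z ! j" unfolding Zn using i j e by (simp add: nth_append)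
      thus "take ?m As ! i = take ?m As ! j" using As(3) i j lZ by auto
    qed simp
  qed
qed

lemma subword_char: "subword S w \<longleftrightarrow> (\<exists>p. p + length S \<le> length w \<and> S = take (length S) (drop p w))"
proof
  assume "subword S w" then obtain U U' where "w = U @ S @ U'" unfolding subword_def by blast
  thus "\<exists>p. p + length S \<le> length w \<and> S = take (length S) (drop p w)"
    by (intro exI[of _ "length U"]) auto
next
  assume "\<exists>p. p + length S \<le> length w \<and> S = take (length S) (drop p w)"
  then obtain p where p: "p + length S \<le> length w" "S = take (length S) (drop p w)" by blast
  have "drop p w = take (length S) (drop p w) @ drop (length S) (drop p w)" by (rule append_take_drop_id[symmetric])
  hence "w = take p w @ take (length S) (drop p w) @ drop (length S) (drop p w)"
    by (metis append_take_drop_id)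
  thus "subword S w" unfolding subword_def using p(2) by metis
qed


lemma encounters_prefix: "encounters (take k w) Z \<Longrightarrow> encounters w Z"
proof -
  assume "encounters (take k w) Z"
  then obtain S U U' where "take k w = U @ S @ U'" "instance_of S Z"
    unfolding encounters_def subword_def by blast
  hence "w = U @ S @ (U' @ drop k w)" by (metis append_assoc append_take_drop_id)
  thus ?thesis unfolding encounters_def subword_def using \<open>instance_of S Z\<close> by blast
qed

lemma qary_take_drop: "qary q w \<Longrightarrow> qary q (take a (drop b w))"
  unfolding qary_def by (meson dual_order.trans set_drop_subset set_take_subset)

lemma tdt: "u + s \<le> M \<Longrightarrow> take s (drop u (take M (drop b ys))) = take s (drop (u + b) ys)"
  by (simp add: drop_take min_def add.commute)

lemma blk: "i < (K::nat) \<Longrightarrow> i*(M+1) + M < K*(M+1)"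
proof -
  assume "i < K"
  hence "Suc i * (M+1) \<le> K*(M+1)" by (intro mult_le_mono1) simp
  thus ?thesis by simp
qed

lemma zimin_exists: "\<exists>M. \<forall>w. qary q w \<and> length w = M \<longrightarrow> encounters w (zimin n)"
proof (induction n)
  case 0
  show ?case
    by (intro exI[of _ 0]) (auto simp: encounters_def subword_def instance_of_def)
next
  case (Suc n)
  then obtain M where M: "\<And>w. qary q w \<Longrightarrow> length w = M \<Longrightarrow> encounters w (zimin n)" by blast
  define K where "K = q^M + 1"
  define N where "N = K * (M+1)"
  show ?case
  proof (intro exI[of _ N] allI impI)
    fix w assume w: "qary q w \<and> length w = N"
    define X where "X i = take M (drop (i*(M+1)) w)" for i
    have lenX: "length (X i) = M" if "i < K" for i
    proof -
      have "i*(M+1) + M < N" unfolding N_def using that by (rule blk)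
      thus ?thesis unfolding X_def using w by simp
    qed
    have XW: "X ` {..<K} \<subseteq> {xs. set xs \<subseteq> {..<q} \<and> length xs = M}"
      using lenX qary_take_drop[of q w] w unfolding X_def qary_def by auto
    have "card (X ` {..<K}) \<le> q^M"
      using card_mono[OF _ XW] card_lists_length_eq[of "{..<q}" M] by (simp add: finite_lists_length_eq)
    hence "\<not> inj_on X {..<K}" by (intro pigeonhole) (simp add: K_def)
    then obtain i j where ij: "i < j" "j < K" "X i = X j"
      unfolding inj_on_def by (metis lessThan_iff linorder_neqE_nat)
    have "encounters (X i) (zimin n)" using M lenX ij qary_take_drop[of q w] w unfolding X_def by auto
    then obtain S U U' where SU: "X i = U @ S @ U'" "instance_of S (zimin n)"
      unfolding encounters_def subword_def by blast
    define u where "u = length U"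
    define s where "s = length S"
    define P where "P = i*(M+1) + u"
    define D where "D = (j-i)*(M+1)"
    define v where "v = drop P w"
    have "length (X i) = u + s + length U'" using SU(1) unfolding u_def s_def by simp
    hence us: "u + s \<le> M" using lenX[of i] ij by linarith
    have S1: "S = take s (drop u (X i))" using SU unfolding u_def s_def by simp
    have S2: "S = take s (drop u (X j))" using SU ij unfolding u_def s_def by simp
    have vS1: "take s v = S" using S1 tdt[OF us, of "i*(M+1)" w] unfolding X_def v_def P_def
      by (simp add: add.commute)
    have ij': "i*(M+1) \<le> j*(M+1)" using ij by (intro mult_le_mono1) simp
    have "(j-i)*(M+1) = j*(M+1) - i*(M+1)" by (rule diff_mult_distrib)
    hence jP: "j*(M+1) + u = D + P" unfolding D_def P_def using ij' by linarith
    have "S = take s (drop (u + j*(M+1)) w)" using S2 tdt[OF us, of "j*(M+1)" w] unfolding X_def by simp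
    hence vS2: "take s (drop D v) = S" unfolding v_def using jP
      by (simp add: add.commute)
    have DM: "D \<ge> M + 1" unfolding D_def using mult_le_mono1[of 1 "j-i" "M+1"] ij by simp
    have jK: "j*(M+1) + M < N" unfolding N_def using ij(2) by (rule blk)
    have bound: "P + (D + s) \<le> length w" using jP jK us w by linarith
    define G where "G = take (D - s) (drop s v)"
    have T: "take (D + s) v = S @ G @ S"
    proof -
      have "take (D + s) v = take D v @ take s (drop D v)" by (rule take_add)
      moreover have "take D v = take s v @ take (D - s) (drop s v)"
        using take_add[of s "D-s" v] us DM by simp
      ultimately show ?thesis using vS1 vS2 unfolding G_def by simp
    qed
    have "length G = D - s" unfolding G_def v_def using bound by simp
    hence Gne: "G \<noteq> []" using us DM by auto
    have lenT: "length (S @ G @ S) = D + s" using T[symmetric] bound unfolding v_def by simp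
    have "subword (S @ G @ S) w" unfolding subword_char
      by (intro exI[of _ P]) (use lenT bound T in \<open>auto simp: v_def\<close>)
    thus "encounters w (zimin (Suc n))" unfolding encounters_def
      using inst_Suc_I[OF SU(2) Gne] by blast
  qed
qed

lemma f_prop: "qary q w \<Longrightarrow> length w = f n q \<Longrightarrow> encounters w (zimin n)"
  using LeastI_ex[OF zimin_exists[of q n]] unfolding f_def by blast

lemma f_pos: "n \<ge> 1 \<Longrightarrow> f n q \<ge> 1"
proof (rule ccontr)
  assume n: "n \<ge> 1" and "\<not> f n q \<ge> 1"
  hence "f n q = 0" by simp
  hence "encounters ([]::nat list) (zimin n)" using f_prop[of q "[]" n] by (simp add: qary_def)
  then obtain S :: "nat list" where "subword S []" "instance_of S (zimin n)" unfolding encounters_def by blast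
  hence "S = []" "length (zimin n) \<le> length S" using inst_len[of S "zimin n"] unfolding subword_def by auto
  moreover have "length (zimin n) \<ge> 1" using n len_zimin[of n]
    by (metis Suc_le_eq diff_Suc_1 le_add_diff_inverse one_less_numeral_iff one_less_power semiring_norm(76) Suc_pred zero_less_power pos2 le_refl  less_one not_le)
  ultimately show False by simp
qed

lemma f_gt: "qary q w \<Longrightarrow> \<not> encounters w (zimin n) \<Longrightarrow> length w < f n q"
proof (rule ccontr)
  assume a: "qary q w" "\<not> encounters w (zimin n)" "\<not> length w < f n q"
  have "encounters (take (f n q) w) (zimin n)"
    using f_prop[of q "take (f n q) w" n] a qary_take_drop[of q w "f n q" 0] by simp
  thus False using encounters_prefix a by blast
qed


definition Wd :: "nat \<Rightarrow> nat \<Rightarrow> nat list set" where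
  "Wd q k = {xs. set xs \<subseteq> {..<q} \<and> length xs = k}"
definition In :: "nat \<Rightarrow> nat \<Rightarrow> nat \<Rightarrow> nat list set" where
  "In n q L = {w. qary q w \<and> length w = L \<and> instance_of w (zimin n)}"

lemma Wd_fin: "finite (Wd q k)"
  unfolding Wd_def by (rule finite_lists_length_eq) simp

lemma Wd_card: "card (Wd q k) = q^k"
  unfolding Wd_def using card_lists_length_eq[of "{..<q}" k] by simp

lemma In_sub: "In n q L \<subseteq> Wd q L" unfolding In_def Wd_def qary_def by blast
lemma In_fin: "finite (In n q L)" using In_sub Wd_fin by (rule finite_subset)

lemma geo: "finite K \<Longrightarrow> (\<Sum>k\<in>K. (1/2::real)^k) \<le> 2"
proof -
  assume K: "finite K"
  obtain N where "\<forall>k\<in>K. k < N" using K finite_nat_set_iff_bounded by blast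
  hence "K \<subseteq> {..<N}" by blast
  hence "(\<Sum>k\<in>K. (1/2::real)^k) \<le> (\<Sum>k<N. (1/2::real)^k)"
    by (intro sum_mono2) auto
  also have "\<dots> = (1 - (1/2)^N) / (1/2)" by (simp add: sum_gp_strict)
  also have "\<dots> \<le> 2" by simp
  finally show ?thesis .
qed

lemma two_pow_ge: "Suc (Suc n) \<le> 2 ^ Suc n"
  using less_exp[of "Suc n"] by simp

lemma inst_bound:
  assumes q: "q \<ge> 2"
  shows "real (card (In (Suc n) q L)) * real q^(2^(Suc n) - Suc n - 1) \<le> 2^n * real q^L"
proof (induction n arbitrary: L)
  case 0
  have "card (In (Suc 0) q L) \<le> q^L" using card_mono[OF Wd_fin In_sub] Wd_card by metis
  thus ?case by simp
next
  case (Suc n)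
  define m :: nat where "m = 2^(Suc n) - 1"
  define e :: nat where "e = 2^(Suc n) - Suc n - 1"
  define A where "A = {a. m \<le> a \<and> 2*a < L}"
  have finA: "finite A" unfolding A_def by (rule finite_subset[of _ "{..<L}"]) auto
  have sub: "In (Suc (Suc n)) q L \<subseteq> (\<Union>a\<in>A. (\<lambda>(X,B). X@B@X) ` (In (Suc n) q a \<times> Wd q (L - 2*a)))"
  proof
    fix w assume "w \<in> In (Suc (Suc n)) q L"
    hence w: "qary q w" "length w = L" "instance_of w (zimin (Suc (Suc n)))" unfolding In_def by auto
    obtain X B where XB: "w = X@B@X" "B \<noteq> []" "instance_of X (zimin (Suc n))"
      using inst_Suc_D[OF w(3)] by blast
    have "m \<le> length X" using inst_len[OF XB(3)] len_zimin unfolding m_def by metis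
    moreover have "2 * length X < L" using w(2) XB(1,2) by auto
    ultimately have aA: "length X \<in> A" unfolding A_def by simp
    have "X \<in> In (Suc n) q (length X)" using w(1) XB unfolding In_def qary_def by auto
    moreover have "B \<in> Wd q (L - 2 * length X)"
    proof -
      have "set B \<subseteq> {..<q}" using w(1) XB(1) unfolding qary_def by simp
      moreover have "length B = L - 2 * length X" using w(2) XB(1) by simp
      ultimately show ?thesis unfolding Wd_def by simp
    qed
    ultimately have "(X,B) \<in> In (Suc n) q (length X) \<times> Wd q (L - 2 * length X)" by simp
    hence "w \<in> (\<lambda>(X,B). X@B@X) ` (In (Suc n) q (length X) \<times> Wd q (L - 2 * length X))"
      using XB(1) by (intro rev_image_eqI[of "(X,B)"]) auto
    thus "w \<in> (\<Union>a\<in>A. (\<lambda>(X,B). X@B@X) ` (In (Suc n) q a \<times> Wd q (L - 2*a)))"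
      using aA by (rule UN_I[rotated])
  qed
  have "card (In (Suc (Suc n)) q L) \<le> card (\<Union>a\<in>A. (\<lambda>(X,B). X@B@X) ` (In (Suc n) q a \<times> Wd q (L - 2*a)))"
    by (rule card_mono[OF _ sub]) (auto intro!: finite_UN_I finA In_fin Wd_fin)
  also have "\<dots> \<le> (\<Sum>a\<in>A. card ((\<lambda>(X,B). X@B@X) ` (In (Suc n) q a \<times> Wd q (L - 2*a))))"
    by (rule card_UN_le[OF finA])
  also have "\<dots> \<le> (\<Sum>a\<in>A. card (In (Suc n) q a) * q^(L - 2*a))"
  proof (intro sum_mono)
    fix a
    have "card ((\<lambda>(X,B). X@B@X) ` (In (Suc n) q a \<times> Wd q (L - 2*a))) \<le> card (In (Suc n) q a \<times> Wd q (L - 2*a))"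
      by (rule card_image_le) (simp add: In_fin Wd_fin)
    also have "\<dots> = card (In (Suc n) q a) * q^(L - 2*a)" by (simp add: card_cartesian_product Wd_card)
    finally show "card ((\<lambda>(X,B). X@B@X) ` (In (Suc n) q a \<times> Wd q (L - 2*a))) \<le> card (In (Suc n) q a) * q^(L - 2*a)" .
  qed
  finally have c0: "card (In (Suc (Suc n)) q L) \<le> (\<Sum>a\<in>A. card (In (Suc n) q a) * q^(L - 2*a))" .
  have c1: "real (card (In (Suc (Suc n)) q L)) \<le> (\<Sum>a\<in>A. real (card (In (Suc n) q a)) * real q^(L - 2*a))"
    using of_nat_mono[OF c0, where 'a=real] by (simp add: of_nat_sum)
  have exp: "2^(Suc (Suc n)) - Suc (Suc n) - 1 = e + m"
    using two_pow_ge[of n] unfolding e_def m_def by simp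
  have qpos: "real q > 0" using q by simp
  have trm: "real (card (In (Suc n) q a)) * real q^(L - 2*a) * real q^(e+m) \<le> 2^n * real q^L * (1/2)^(a-m)"
    if a: "a \<in> A" for a
  proof -
    have am: "m \<le> a" "2*a < L" using a unfolding A_def by auto
    have i1: "real (card (In (Suc n) q a)) * real q^e \<le> 2^n * real q^a" using Suc.IH[of a] unfolding e_def .
    have eqL: "real q^a * (real q^(L - 2*a) * real q^m) = real q^L / real q^(a-m)"
    proof -
      have "real q^a * (real q^(L - 2*a) * real q^m) * real q^(a-m) = real q^(a + (L-2*a) + m + (a-m))"
        by (simp add: power_add)
      also have "a + (L-2*a) + m + (a-m) = L" using am by simp
      finally show ?thesis using qpos by (simp add: field_simps)
    qed
    have "real (card (In (Suc n) q a)) * real q^(L - 2*a) * real q^(e+m)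
        = (real (card (In (Suc n) q a)) * real q^e) * (real q^(L - 2*a) * real q^m)"
      by (simp add: power_add)
    also have "\<dots> \<le> (2^n * real q^a) * (real q^(L - 2*a) * real q^m)"
      using i1 qpos by (intro mult_right_mono) auto
    also have "\<dots> = 2^n * (real q^L / real q^(a-m))"
      by (simp only: mult.assoc eqL)
    also have "\<dots> = 2^n * (real q^L * (1/real q)^(a-m))" by (simp add: power_one_over)
    also have "\<dots> \<le> 2^n * (real q^L * (1/2)^(a-m))"
      using q qpos by (intro mult_left_mono power_mono) (auto simp: field_simps)
    finally show ?thesis by (simp only: mult.assoc)
  qed
  have sb: "(\<Sum>a\<in>A. (1/2::real)^(a-m)) \<le> 2"
  proof -
    have "(\<Sum>a\<in>A. (1/2::real)^(a-m)) = (\<Sum>k\<in>(\<lambda>a. a-m)`A. (1/2)^k)"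
      by (subst sum.reindex) (auto simp: inj_on_def A_def)
    also have "\<dots> \<le> 2" using finA by (intro geo) simp
    finally show ?thesis .
  qed
  have "real (card (In (Suc (Suc n)) q L)) * real q^(e+m) \<le> (\<Sum>a\<in>A. real (card (In (Suc n) q a)) * real q^(L - 2*a)) * real q^(e+m)"
    using c1 by (rule mult_right_mono) simp
  also have "\<dots> = (\<Sum>a\<in>A. real (card (In (Suc n) q a)) * real q^(L - 2*a) * real q^(e+m))"
    by (simp add: sum_distrib_right)
  also have "\<dots> \<le> (\<Sum>a\<in>A. 2^n * real q^L * (1/2)^(a-m))" by (rule sum_mono) (rule trm)
  also have "\<dots> = 2^n * real q^L * (\<Sum>a\<in>A. (1/2)^(a-m))" by (simp add: sum_distrib_left)
  also have "\<dots> \<le> 2^n * real q^L * 2" using sb qpos by (intro mult_left_mono) auto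
  also have "2^n * real q^L * 2 = 2^Suc n * real q^L" by (simp add: mult.commute)
  finally show ?case unfolding exp .
qed


lemma enc_bound:
  assumes q: "q \<ge> 2"
  shows "real (card {w. qary q w \<and> length w = M \<and> encounters w (zimin (Suc n))}) * real q^(2^(Suc n) - Suc n - 1)
    \<le> real (M+1)^2 * 2^n * real q^M"
proof -
  define e :: nat where "e = 2^(Suc n) - Suc n - 1"
  define E where "E = {w. qary q w \<and> length w = M \<and> encounters w (zimin (Suc n))}"
  define F where "F p L = (\<lambda>(U,S,U'). U@S@U') ` (Wd q p \<times> In (Suc n) q L \<times> Wd q (M-p-L))" for p L
  have sub: "E \<subseteq> (\<Union>p\<in>{..M}. \<Union>L\<in>{..M-p}. F p L)"
  proof
    fix w assume "w \<in> E"
    hence w: "qary q w" "length w = M" "encounters w (zimin (Suc n))" unfolding E_def by auto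
    obtain U S U' where US: "w = U@S@U'" "instance_of S (zimin (Suc n))"
      using w(3) unfolding encounters_def subword_def by blast
    have sw: "set U \<subseteq> {..<q}" "set S \<subseteq> {..<q}" "set U' \<subseteq> {..<q}"
      using w(1) unfolding US(1) qary_def by simp_all
    have lU': "length U' = M - length U - length S" using w(2) unfolding US(1) by simp
    have "U \<in> Wd q (length U)" using sw unfolding Wd_def by blast
    moreover have "S \<in> In (Suc n) q (length S)" using sw US(2) unfolding In_def qary_def by blast
    moreover have "U' \<in> Wd q (M - length U - length S)" using sw lU' unfolding Wd_def by blast
    ultimately
    have "(U,S,U') \<in> Wd q (length U) \<times> In (Suc n) q (length S) \<times> Wd q (M - length U - length S)" by blast
    hence "w \<in> F (length U) (length S)" unfolding F_def using US(1) by (intro rev_image_eqI[of "(U,S,U')"]) simp_all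
    moreover have "length U \<in> {..M}" "length S \<in> {..M - length U}" using w(2) US(1) by auto
    ultimately show "w \<in> (\<Union>p\<in>{..M}. \<Union>L\<in>{..M-p}. F p L)" by blast
  qed
  have finF: "finite (F p L)" for p L unfolding F_def by (intro finite_imageI finite_cartesian_product Wd_fin In_fin)
  have "card E \<le> card (\<Union>p\<in>{..M}. \<Union>L\<in>{..M-p}. F p L)"
    by (rule card_mono[OF _ sub]) (intro finite_UN_I finite_atMost finF)
  also have "\<dots> \<le> (\<Sum>p\<in>{..M}. card (\<Union>L\<in>{..M-p}. F p L))" by (rule card_UN_le) simp
  also have "\<dots> \<le> (\<Sum>p\<in>{..M}. \<Sum>L\<in>{..M-p}. card (F p L))" by (intro sum_mono card_UN_le) simp
  also have "\<dots> \<le> (\<Sum>p\<in>{..M}. \<Sum>L\<in>{..M-p}. q^p * card (In (Suc n) q L) * q^(M-p-L))"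
  proof (intro sum_mono)
    fix p L
    have "card (F p L) \<le> card (Wd q p \<times> In (Suc n) q L \<times> Wd q (M-p-L))"
      unfolding F_def by (rule card_image_le) (simp add: In_fin Wd_fin)
    also have "\<dots> = q^p * card (In (Suc n) q L) * q^(M-p-L)" by (simp add: card_cartesian_product Wd_card)
    finally show "card (F p L) \<le> q^p * card (In (Suc n) q L) * q^(M-p-L)" .
  qed
  finally have c0: "card E \<le> (\<Sum>p\<in>{..M}. \<Sum>L\<in>{..M-p}. q^p * card (In (Suc n) q L) * q^(M-p-L))" .
  have c1: "real (card E) \<le> (\<Sum>p\<in>{..M}. \<Sum>L\<in>{..M-p}. real q^p * real (card (In (Suc n) q L)) * real q^(M-p-L))"
    using of_nat_mono[OF c0, where 'a=real] by (simp add: of_nat_sum)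
  have qpos: "real q > 0" using q by simp
  have trm: "real q^p * real (card (In (Suc n) q L)) * real q^(M-p-L) * real q^e \<le> 2^n * real q^M"
    if "p \<le> M" "L \<le> M - p" for p L
  proof -
    have pw: "real q^L * (real q^p * real q^(M-p-L)) = real q^M"
    proof -
      have "real q^L * (real q^p * real q^(M-p-L)) = real q^(L + p + (M-p-L))" by (simp add: power_add)
      also have "L + p + (M-p-L) = M" using that by simp
      finally show ?thesis .
    qed
    have "real q^p * real (card (In (Suc n) q L)) * real q^(M-p-L) * real q^e
        = (real (card (In (Suc n) q L)) * real q^e) * (real q^p * real q^(M-p-L))" by simp
    also have "\<dots> \<le> (2^n * real q^L) * (real q^p * real q^(M-p-L))"
      using inst_bound[OF q, of n L] qpos unfolding e_def by (intro mult_right_mono) auto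
    also have "\<dots> = 2^n * real q^M" by (simp only: mult.assoc pw)
    finally show ?thesis .
  qed
  have "real (card E) * real q^e \<le> (\<Sum>p\<in>{..M}. \<Sum>L\<in>{..M-p}. real q^p * real (card (In (Suc n) q L)) * real q^(M-p-L)) * real q^e"
    using c1 by (rule mult_right_mono) simp
  also have "\<dots> = (\<Sum>p\<in>{..M}. \<Sum>L\<in>{..M-p}. real q^p * real (card (In (Suc n) q L)) * real q^(M-p-L) * real q^e)"
    by (simp add: sum_distrib_right)
  also have "\<dots> \<le> (\<Sum>p\<in>{..M}. \<Sum>L\<in>{..M-p}. 2^n * real q^M)"
    by (intro sum_mono trm) auto
  also have "\<dots> \<le> (\<Sum>p\<in>{..M}. real (M+1) * (2^n * real q^M))"
  proof (intro sum_mono)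
    fix p assume "p \<in> {..M}"
    have "(\<Sum>L\<in>{..M-p}. 2^n * real q^M) = real (M - p + 1) * (2^n * real q^M)" by simp
    also have "\<dots> \<le> real (M+1) * (2^n * real q^M)" by (intro mult_right_mono) auto
    finally show "(\<Sum>L\<in>{..M-p}. 2^n * real q^M) \<le> real (M+1) * (2^n * real q^M)" .
  qed
  also have "\<dots> = real (M+1)^2 * 2^n * real q^M" by (simp add: power2_eq_square)
  finally show ?thesis unfolding E_def e_def .
qed

lemma avoid_exists:
  assumes q: "q \<ge> 2" and c: "(M+1)^2 * 2^n < q^(2^(Suc n) - Suc n - 1)"
  shows "\<exists>w. qary q w \<and> length w = M \<and> \<not> encounters w (zimin (Suc n))"
proof (rule ccontr)
  assume "\<not> ?thesis"
  hence eq: "{w. qary q w \<and> length w = M \<and> encounters w (zimin (Suc n))} = Wd q M"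
    unfolding Wd_def qary_def by blast
  have qpos: "real q > 0" using q by simp
  have "real (q^M) * real q^(2^(Suc n) - Suc n - 1) \<le> real (M+1)^2 * 2^n * real q^M"
    using enc_bound[OF q, of M n] unfolding eq Wd_card .
  moreover have "real ((M+1)^2 * 2^n) < real (q^(2^(Suc n) - Suc n - 1))"
    using c by (simp only: of_nat_less_iff)
  hence "real (M+1)^2 * 2^n < real q^(2^(Suc n) - Suc n - 1)"
    by (simp only: of_nat_mult of_nat_power of_nat_numeral)
  hence "real (M+1)^2 * 2^n * real q^M < real q^(2^(Suc n) - Suc n - 1) * real q^M"
    using qpos by (intro mult_strict_right_mono) auto
  moreover have "real (q^M) * real q^(2^(Suc n) - Suc n - 1) = real q^(2^(Suc n) - Suc n - 1) * real q^M"
    by (simp only: of_nat_power mult.commute)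
  ultimately show False by linarith
qed


lemma main_ineq:
  assumes q: "q \<ge> 2"
  shows "real (f (Suc k) q) \<ge> real q powr (2^k - (real k + 2))"
proof (cases "k \<le> 2")
  case True
  have "(2::real)^k \<le> real k + 2" using True by (cases k; cases "k - 1") auto
  hence "real q powr (2^k - (real k + 2)) \<le> real q powr 0" using q by (intro powr_mono) auto
  also have "\<dots> = 1" using q by simp
  also have "1 \<le> real (f (Suc k) q)" using f_pos[of "Suc k" q] by simp
  finally show ?thesis .
next
  case False
  define t :: nat where "t = 2^k - (k+2)"
  have kk: "k + 2 < 2^k" using False
  proof (induction k)
    case (Suc k) show ?case
    proof (cases "k \<le> 2")
      case True hence "k = 2" using Suc by simp thus ?thesis by simp
    next
      case False thus ?thesis using Suc by simp
    qed
  qed simp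
  have tr: "real t = 2^k - (real k + 2)" unfolding t_def using kk by (simp add: of_nat_diff)
  have qpos: "real q > 0" using q by simp
  have rhs: "real q powr (2^k - (real k + 2)) = real (q^t)"
    using tr qpos by (metis of_nat_power powr_realpow)
  have qt: "q^t \<ge> 1" using q by simp
  have ex: "2^(Suc k) - Suc k - 1 = 2*t + (k+2)" unfolding t_def using kk by simp
  have e1: "q^t - 1 + 1 = q^t" using qt by simp
  have "(q^t - 1 + 1)^2 * 2^k = q^(2*t) * 2^k" unfolding e1 by (simp add: power_mult[symmetric] mult.commute)
  also have "\<dots> < q^(2*t) * q^(k+2)"
  proof (intro mult_strict_left_mono)
    have "(2::nat)^k < 2^(k+2)" by simp
    also have "\<dots> \<le> q^(k+2)" using q by (intro power_mono) auto
    finally show "2^k < q^(k+2)" .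
  qed (use q in simp)
  also have "\<dots> = q^(2^(Suc k) - Suc k - 1)" unfolding ex by (simp add: power_add)
  finally obtain w where w: "qary q w" "length w = q^t - 1" "\<not> encounters w (zimin (Suc k))"
    using avoid_exists[OF q] by blast
  have "q^t - 1 < f (Suc k) q" using f_gt[OF w(1,3)] w(2) by simp
  hence "q^t \<le> f (Suc k) q" using qt by simp
  thus ?thesis unfolding rhs by simp
qed

theorem mainTheorem2:
  shows "\<exists>\<epsilon> :: nat \<Rightarrow> nat \<Rightarrow> real.
           ((\<lambda>(n, q). \<epsilon> n q) \<longlongrightarrow> 0) (at_top \<times>\<^sub>F at_top) \<and>
           (\<forall>n q. n \<ge> 1 \<longrightarrow> q \<ge> 2 \<longrightarrow>
              real (f n q) \<ge> real q powr (2 ^ (n - 1) * (1 + \<epsilon> n q)))"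
proof (intro exI[of _ "\<lambda>n q. - 2 * (real n + 1) / 2^n"] conjI allI impI)
  define g where "g = (\<lambda>n::nat. - 2 * (real n + 1) / 2^n)"
  have "g \<longlonglongrightarrow> 0" unfolding g_def by real_asymp
  hence "((\<lambda>p. g (fst p)) \<longlongrightarrow> 0) ((at_top::nat filter) \<times>\<^sub>F (at_top::nat filter))"
    by (rule filterlim_compose) (rule filterlim_fst)
  thus "((\<lambda>(n, q::nat). - 2 * (real n + 1) / 2^n) \<longlongrightarrow> 0) (at_top \<times>\<^sub>F at_top)"
    unfolding g_def by (simp add: case_prod_beta')
next
  fix n q :: nat assume n: "n \<ge> 1" and q: "q \<ge> 2"
  then obtain k where k: "n = Suc k" by (metis Suc_le_D One_nat_def)
  have "2 ^ (n - 1) * (1 + - 2 * (real n + 1) / 2^n) = (2::real)^k - (real k + 2)"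
    unfolding k by (simp add: field_simps)
  thus "real q powr (2 ^ (n - 1) * (1 + - 2 * (real n + 1) / 2^n)) \<le> real (f n q)"
    using main_ineq[OF q, of k] k by simp
qed

end
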